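(* In the MHAV setting described in the context, with $Y$, $f$, $\Lambda$ and $\phi_Y$ fixed, the diameter $D$ of $\bar P_{\mathrm{MH}}$ does not depend on the parameters $\alpha'\in(0,1)$ and $\alpha,\beta\in(0,1)$ with $\alpha+\beta<1$.
   Context: MHAV setting: $Y$ is a finite nonempty set, $f:Y\to\mathbb{R}$; $\Lambda=\{\lambda_1<\dots<\lambda_n\}$ positive reals, $n\ge2$; $\bar\Pi(\lambda,y)=\lambda^{-f(y)}/Z$ on $\Lambda\times Y$, $Z=\sum_{\lambda,y}\lambda^{-f(y)}$. $\phi_Y$ is an irreducible Markov kernel on $Y$. For $\alpha'\in(0,1)$: $\phi_\Lambda(\lambda_1,\lambda_2)=1$, $\phi_\Lambda(\lambda_n,\lambda_{n-1})=1$, and for $1<i<n$, $\phi_\Lambda(\lambda_i,\lambda_{i+1})=\alpha'$, $\phi_\Lambda(\lambda_i,\lambda_{i-1})=1-\alpha'$, other entries $0$. $\bar\phi[(\lambda,y),(\lambda',y')]=\alpha\phi_\Lambda(\lambda,\lambda')$ if $\lambda\ne\lambda',y=y'$; $\beta\phi_Y(y,y')$ if $\lambda=\lambda',y\ne y'$; $(1-\alpha-\beta)+\beta\phi_Y(y,y)$ if $(\lambda,y)=(\lambda',y')$; $0$ otherwise. $\bar{\mathsf{Acc}}(x,x')=\min\{1,\frac{\bar\phi(x',x)\bar\Pi(x')}{\bar\phi(x,x')\bar\Pi(x)}\}$; $\bar P_{\mathrm{MH}}(x,x')=\bar\phi(x,x')\bar{\mathsf{Acc}}(x,x')$ for $x\ne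 x'$, $\bar P_{\mathrm{MH}}(x,x)=1-\sum_{x'\ne x}\bar P_{\mathrm{MH}}(x,x')$. The diameter is $D=\min\{l:\ \bar P^l_{\mathrm{MH}}(x,x')>0\text{ for all }x,x'\in\Lambda\times Y\}$ (with $\bar P^l_{\mathrm{MH}}$ the $l$-step transition probabilities), understood as $+\infty$ if the set is empty. *)

theory Defs
  imports Complex_Main "HOL-Library.Extended_Nat"
begin

text \<open>Temperature ladder: \<Lambda> = {lam 0 < ... < lam (n-1)} (0-based indexing of
  lambda_1 < ... < lambda_n).  State space of the augmented chain: \<Lambda> \<times> Y.\<close>

definition Lset :: "(nat \<Rightarrow> real) \<Rightarrow> nat \<Rightarrow> real set" where
  "Lset lam n = lam ` {0..<n}"

definition stspace :: "(nat \<Rightarrow> real) \<Rightarrow> nat \<Rightarrow> 'a set \<Rightarrow> (real \<times> 'a) set" where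
  "stspace lam n Y = Lset lam n \<times> Y"

definition phiL :: "(nat \<Rightarrow> real) \<Rightarrow> nat \<Rightarrow> real \<Rightarrow> real \<Rightarrow> real \<Rightarrow> real" where
  "phiL lam n a' l l' =
     (if l = lam 0 \<and> l' = lam 1 then 1
      else if l = lam (n - 1) \<and> l' = lam (n - 2) then 1
      else if \<exists>i. 0 < i \<and> i < n - 1 \<and> l = lam i \<and> l' = lam (i + 1) then a'
      else if \<exists>i. 0 < i \<and> i < n - 1 \<and> l = lam i \<and> l' = lam (i - 1) then 1 - a'
      else 0)"

definition Zc :: "(nat \<Rightarrow> real) \<Rightarrow> nat \<Rightarrow> 'a set \<Rightarrow> ('a \<Rightarrow> real) \<Rightarrow> real" where
  "Zc lam n Y f = (\<Sum>x\<in>stspace lam n Y. fst x powr (- f (snd x)))"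

definition Pibar :: "(nat \<Rightarrow> real) \<Rightarrow> nat \<Rightarrow> 'a set \<Rightarrow> ('a \<Rightarrow> real) \<Rightarrow> real \<times> 'a \<Rightarrow> real" where
  "Pibar lam n Y f x = fst x powr (- f (snd x)) / Zc lam n Y f"

definition phibar :: "(nat \<Rightarrow> real) \<Rightarrow> nat \<Rightarrow> ('a \<Rightarrow> 'a \<Rightarrow> real) \<Rightarrow> real \<Rightarrow> real \<Rightarrow> real
      \<Rightarrow> real \<times> 'a \<Rightarrow> real \<times> 'a \<Rightarrow> real" where
  "phibar lam n phiY a' a b x x' =
     (let (l, y) = x; (l', y') = x' in
      if l \<noteq> l' \<and> y = y' then a * phiL lam n a' l l'
      else if l = l' \<and> y \<noteq> y' then b * phiY y y'
      else if l = l' \<and> y = y' then (1 - a - b) + b * phiY y y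
      else 0)"

definition Accbar :: "(nat \<Rightarrow> real) \<Rightarrow> nat \<Rightarrow> 'a set \<Rightarrow> ('a \<Rightarrow> real) \<Rightarrow> ('a \<Rightarrow> 'a \<Rightarrow> real)
      \<Rightarrow> real \<Rightarrow> real \<Rightarrow> real \<Rightarrow> real \<times> 'a \<Rightarrow> real \<times> 'a \<Rightarrow> real" where
  "Accbar lam n Y f phiY a' a b x x' =
     min 1 ((phibar lam n phiY a' a b x' x * Pibar lam n Y f x') /
            (phibar lam n phiY a' a b x x' * Pibar lam n Y f x))"

definition PMH :: "(nat \<Rightarrow> real) \<Rightarrow> nat \<Rightarrow> 'a set \<Rightarrow> ('a \<Rightarrow> real) \<Rightarrow> ('a \<Rightarrow> 'a \<Rightarrow> real)
      \<Rightarrow> real \<Rightarrow> real \<Rightarrow> real \<Rightarrow> real \<times> 'a \<Rightarrow> real \<times> 'a \<Rightarrow> real" where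
  "PMH lam n Y f phiY a' a b x x' =
     (if x \<noteq> x' then phibar lam n phiY a' a b x x' * Accbar lam n Y f phiY a' a b x x'
      else 1 - (\<Sum>z\<in>stspace lam n Y - {x}.
                  phibar lam n phiY a' a b x z * Accbar lam n Y f phiY a' a b x z))"

fun kpow :: "('s \<Rightarrow> 's \<Rightarrow> real) \<Rightarrow> 's set \<Rightarrow> nat \<Rightarrow> 's \<Rightarrow> 's \<Rightarrow> real" where
  "kpow P S 0 x x' = (if x = x' then 1 else 0)"
| "kpow P S (Suc l) x x' = (\<Sum>z\<in>S. kpow P S l x z * P z x')"

definition diameter :: "('s \<Rightarrow> 's \<Rightarrow> real) \<Rightarrow> 's set \<Rightarrow> enat" where
  "diameter P S =
     (if \<exists>l. \<forall>x\<in>S. \<forall>x'\<in>S. kpow P S l x x' > 0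
      then enat (LEAST l. \<forall>x\<in>S. \<forall>x'\<in>S. kpow P S l x x' > 0) else \<infinity>)"

definition markov_kernel_on :: "'a set \<Rightarrow> ('a \<Rightarrow> 'a \<Rightarrow> real) \<Rightarrow> bool" where
  "markov_kernel_on Y K \<longleftrightarrow> (\<forall>y\<in>Y. \<forall>y'\<in>Y. K y y' \<ge> 0) \<and> (\<forall>y\<in>Y. (\<Sum>y'\<in>Y. K y y') = 1)"

definition irreducible_on :: "'a set \<Rightarrow> ('a \<Rightarrow> 'a \<Rightarrow> real) \<Rightarrow> bool" where
  "irreducible_on Y K \<longleftrightarrow> (\<forall>y\<in>Y. \<forall>y'\<in>Y. \<exists>t. kpow K Y t y y' > 0)"

definition MHdiam :: "(nat \<Rightarrow> real) \<Rightarrow> nat \<Rightarrow> 'a set \<Rightarrow> ('a \<Rightarrow> real) \<Rightarrow> ('a \<Rightarrow> 'a \<Rightarrow> real)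
      \<Rightarrow> real \<Rightarrow> real \<Rightarrow> real \<Rightarrow> enat" where
  "MHdiam lam n Y f phiY a' a b =
     diameter (PMH lam n Y f phiY a' a b) (stspace lam n Y)"

end

theory Submission
  imports Defs
begin

lemma phiL_ij:
  assumes n: "n \<ge> 2" and sm: "strict_mono_on {0..<n} lam" and i: "i < n" and j: "j < n"
  shows "phiL lam n a' (lam i) (lam j) =
     (if j = i + 1 then (if i = 0 then 1 else if i = n - 1 then 0 else a') else 0)
   + (if j + 1 = i then (if i = n - 1 then 1 else if i = 0 then 0 else 1 - a') else 0)"
proof -
  have inj: "\<And>p q. p < n \<Longrightarrow> q < n \<Longrightarrow> lam p = lam q \<longleftrightarrow> p = q"
    using sm by (metis atLeastLessThan_iff le0 strict_mono_on_eqD)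
  have e1: "(\<exists>k. 0 < k \<and> k < n - 1 \<and> lam i = lam k \<and> lam j = lam (k + 1)) \<longleftrightarrow> (0 < i \<and> i < n - 1 \<and> j = i + 1)"
    using inj i j by (metis add_lessD1 less_diff_conv)
  have e2: "(\<exists>k. 0 < k \<and> k < n - 1 \<and> lam i = lam k \<and> lam j = lam (k - 1)) \<longleftrightarrow> (0 < i \<and> i < n - 1 \<and> j + 1 = i)"
  proof
    assume "\<exists>k. 0 < k \<and> k < n - 1 \<and> lam i = lam k \<and> lam j = lam (k - 1)"
    then obtain k where k: "0 < k" "k < n - 1" "lam i = lam k" "lam j = lam (k - 1)" by blast
    then have "i = k" "j = k - 1" using inj i j by auto
    then show "0 < i \<and> i < n - 1 \<and> j + 1 = i" using k by auto
  next
    assume "0 < i \<and> i < n - 1 \<and> j + 1 = i"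
    then show "\<exists>k. 0 < k \<and> k < n - 1 \<and> lam i = lam k \<and> lam j = lam (k - 1)"
      by (intro exI[of _ i]) auto
  qed
  have e3: "lam i = lam 0 \<longleftrightarrow> i = 0" "lam j = lam 1 \<longleftrightarrow> j = 1" "lam i = lam (n-1) \<longleftrightarrow> i = n - 1"
     "lam j = lam (n-2) \<longleftrightarrow> j = n - 2"
    using inj i j n by auto
  show ?thesis unfolding phiL_def e1 e2 e3 using n i j by auto
qed

lemma phiL_nonneg: "0 \<le> a' \<Longrightarrow> a' \<le> 1 \<Longrightarrow> 0 \<le> phiL lam n a' l l'"
  by (simp add: phiL_def)

lemma phiL_pos_iff: assumes "0 < a'" "a' < 1" "0 < a''" "a'' < 1" shows "
    (0 < phiL lam n a' l l') = (0 < phiL lam n a'' l l')"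
proof -
  have aux: "\<And>x c1 c2 c3 c4. 0<x \<Longrightarrow> x<1 \<Longrightarrow> (0 < (if c1 then 1 else if c2 then 1 else if c3 then x else if c4 then 1-x else (0::real))) = (c1\<or>c2\<or>c3\<or>c4)"
    by auto
  from assms show ?thesis unfolding phiL_def by (simp only: aux)
qed

lemma phiL_sum:
  assumes n: "n \<ge> 2" and sm: "strict_mono_on {0..<n} lam" and i: "i < n"
    and a: "0 < a'" "a' < 1"
  shows "(\<Sum>l'\<in>Lset lam n. phiL lam n a' (lam i) l') \<le> 1"
proof -
  have injo: "inj_on lam {0..<n}" using sm strict_mono_on_imp_inj_on by blast
  have "(\<Sum>l'\<in>Lset lam n. phiL lam n a' (lam i) l') = (\<Sum>j\<in>{0..<n}. phiL lam n a' (lam i) (lam j))"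
    unfolding Lset_def by (simp add: sum.reindex[OF injo])
  also have "\<dots> = (\<Sum>j\<in>{0..<n}. (if j = i + 1 then (if i = 0 then 1 else if i = n - 1 then 0 else a') else 0)
   + (if j = i - 1 then (if 0 < i then (if i = n - 1 then 1 else if i = 0 then 0 else 1 - a') else 0) else 0))"
    by (rule sum.cong) (auto simp: phiL_ij[OF n sm i])
  also have "\<dots> = (if i + 1 \<in> {0..<n} then (if i = 0 then 1 else if i = n - 1 then 0 else a') else 0)
     + (if i - 1 \<in> {0..<n} then (if 0 < i then (if i = n - 1 then 1 else if i = 0 then 0 else 1 - a') else 0) else 0)"
    by (simp add: sum.distrib)
  also have "\<dots> \<le> 1" using a n i by auto
  finally show ?thesis .
qed

definition pat :: "(nat \<Rightarrow> real) \<Rightarrow> nat \<Rightarrow> ('a \<Rightarrow> 'a \<Rightarrow> real) \<Rightarrow> real \<times> 'a \<Rightarrow> real \<times> 'a \<Rightarrow> bool" where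
  "pat lam n phiY x x' = ((fst x \<noteq> fst x' \<and> snd x = snd x' \<and> 0 < phiL lam n (1/2) (fst x) (fst x'))
     \<or> (fst x = fst x' \<and> snd x \<noteq> snd x' \<and> 0 < phiY (snd x) (snd x')))"

context
  fixes Y :: "'a set" and f :: "'a \<Rightarrow> real" and lam :: "nat \<Rightarrow> real" and n :: nat
    and phiY :: "'a \<Rightarrow> 'a \<Rightarrow> real" and a' a b :: real
  assumes fin: "finite Y" and ne: "Y \<noteq> {}" and n: "n \<ge> 2"
    and sm: "strict_mono_on {0..<n} lam" and lpos: "\<forall>i<n. lam i > 0"
    and mk: "markov_kernel_on Y phiY"
    and a': "0 < a'" "a' < 1" and ab: "0 < a" "0 < b" "a + b < 1"
begin

lemma memS: "x \<in> stspace lam n Y \<longleftrightarrow> (\<exists>i<n. fst x = lam i) \<and> snd x \<in> Y"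
  by (cases x) (auto simp: stspace_def Lset_def)

lemma finS: "finite (stspace lam n Y)"
  using fin by (simp add: stspace_def Lset_def)

lemma fst_pos: "x \<in> stspace lam n Y \<Longrightarrow> 0 < fst x"
  using lpos memS by auto

lemma Zc_pos: "0 < Zc lam n Y f"
proof -
  obtain y where y: "y \<in> Y" using ne by blast
  have "(lam 0, y) \<in> stspace lam n Y" using y n memS[of "(lam 0, y)"] by force
  then have "stspace lam n Y \<noteq> {}" by blast
  moreover have "\<And>x. x \<in> stspace lam n Y \<Longrightarrow> 0 < fst x powr - f (snd x)"
    using fst_pos by (metis powr_gt_zero order_less_irrefl)
  ultimately show ?thesis unfolding Zc_def
    using finS by (simp add: sum_pos)
qed

lemma Pi_pos: "x \<in> stspace lam n Y \<Longrightarrow> 0 < Pibar lam n Y f x"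
  unfolding Pibar_def using Zc_pos fst_pos[of x] by (intro divide_pos_pos) auto

lemma phiY_nonneg: "y \<in> Y \<Longrightarrow> y' \<in> Y \<Longrightarrow> 0 \<le> phiY y y'"
  using mk by (simp add: markov_kernel_on_def)

lemma phibar_nonneg: "x \<in> stspace lam n Y \<Longrightarrow> x' \<in> stspace lam n Y \<Longrightarrow> 0 \<le> phibar lam n phiY a' a b x x'"
  using phiY_nonneg[of "snd x" "snd x'"] phiY_nonneg[of "snd x" "snd x"] phiL_nonneg[of a' lam n "fst x" "fst x'"] a' ab
  by (cases x; cases x') (auto simp: phibar_def memS)

lemma phibar_pos: "x \<noteq> x' \<Longrightarrow> (0 < phibar lam n phiY a' a b x x') = pat lam n phiY x x'"
  using ab phiL_pos_iff[of a' "1/2" lam n "fst x" "fst x'"] a'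
  by (cases x; cases x') (auto simp: phibar_def pat_def zero_less_mult_iff)

lemma Acc_nonneg: "x \<in> stspace lam n Y \<Longrightarrow> x' \<in> stspace lam n Y \<Longrightarrow> 0 \<le> Accbar lam n Y f phiY a' a b x x'"
  unfolding Accbar_def using phibar_nonneg Pi_pos
  by (simp add: less_imp_le)

lemma Acc_le1: "Accbar lam n Y f phiY a' a b x x' \<le> 1"
  unfolding Accbar_def by simp

lemma PMH_off: assumes x: "x \<in> stspace lam n Y" and x': "x' \<in> stspace lam n Y" and d: "x \<noteq> x'"
  shows "(0 < PMH lam n Y f phiY a' a b x x') \<longleftrightarrow> pat lam n phiY x x' \<and> pat lam n phiY x' x"
proof -
  have p1: "0 \<le> phibar lam n phiY a' a b x x'" "0 \<le> phibar lam n phiY a' a b x' x"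
    using phibar_nonneg x x' by auto
  have pp: "0 < Pibar lam n Y f x" "0 < Pibar lam n Y f x'" using Pi_pos x x' by auto
  have "(0 < PMH lam n Y f phiY a' a b x x') \<longleftrightarrow>
     0 < phibar lam n phiY a' a b x x' \<and> 0 < Accbar lam n Y f phiY a' a b x x'"
    using d p1 Acc_nonneg[OF x x'] by (auto simp: PMH_def zero_less_mult_iff)
  also have "\<dots> \<longleftrightarrow> 0 < phibar lam n phiY a' a b x x' \<and> 0 < phibar lam n phiY a' a b x' x"
    using p1 pp by (auto simp: Accbar_def zero_less_mult_iff zero_less_divide_iff mult_less_0_iff)
  also have "\<dots> \<longleftrightarrow> pat lam n phiY x x' \<and> pat lam n phiY x' x"
    using phibar_pos d by metis
  finally show ?thesis .
qed


lemma PMH_diag: assumes x: "x \<in> stspace lam n Y" shows "0 < PMH lam n Y f phiY a' a b x x"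
proof -
  obtain l y where xe: "x = (l, y)" by (cases x)
  obtain i where i: "i < n" "l = lam i" and y: "y \<in> Y" using x memS xe by auto
  let ?S = "stspace lam n Y"
  let ?p = "phibar lam n phiY a' a b x"
  define B1 where "B1 = (\<lambda>l'. (l', y)) ` (Lset lam n - {l})"
  define B2 where "B2 = Pair l ` (Y - {y})"
  have finL: "finite (Lset lam n)" by (simp add: Lset_def)
  have lL: "l \<in> Lset lam n" using i by (simp add: Lset_def)
  have B1S: "B1 \<subseteq> ?S - {x}" using xe y by (auto simp: B1_def stspace_def)
  have B2S: "B2 \<subseteq> ?S - {x}" using xe lL by (auto simp: B2_def stspace_def)
  have "(\<Sum>z\<in>?S - {x}. ?p z * Accbar lam n Y f phiY a' a b x z) \<le> (\<Sum>z\<in>?S - {x}. ?p z)"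
  proof (rule sum_mono)
    fix z assume z: "z \<in> ?S - {x}"
    have "0 \<le> ?p z" using phibar_nonneg x z by auto
    then show "?p z * Accbar lam n Y f phiY a' a b x z \<le> ?p z"
      using Acc_le1 by (simp add: mult_left_le)
  qed
  also have "\<dots> = (\<Sum>z\<in>B1 \<union> B2. ?p z)"
  proof (rule sum.mono_neutral_right)
    show "finite (?S - {x})" using finS by simp
    show "B1 \<union> B2 \<subseteq> ?S - {x}" using B1S B2S by simp
    show "\<forall>z\<in>?S - {x} - (B1 \<union> B2). ?p z = 0"
    proof
      fix z assume z: "z \<in> ?S - {x} - (B1 \<union> B2)"
      obtain l' y' where ze: "z = (l', y')" by (cases z)
      have "l' \<in> Lset lam n" "y' \<in> Y" using z ze by (auto simp: stspace_def)
      then have "l' \<noteq> l" "y' \<noteq> y" using z ze xe by (auto simp: B1_def B2_def)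
      then show "?p z = 0" using ze xe by (simp add: phibar_def)
    qed
  qed
  also have "\<dots> = (\<Sum>z\<in>B1. ?p z) + (\<Sum>z\<in>B2. ?p z)"
    by (rule sum.union_disjoint) (auto simp: B1_def B2_def finL fin)
  also have "(\<Sum>z\<in>B1. ?p z) = (\<Sum>l'\<in>Lset lam n - {l}. a * phiL lam n a' l l')"
    unfolding B1_def by (subst sum.reindex) (auto simp: inj_on_def xe phibar_def)
  also have "(\<Sum>z\<in>B2. ?p z) = (\<Sum>y'\<in>Y - {y}. b * phiY y y')"
    unfolding B2_def by (subst sum.reindex) (auto simp: inj_on_def xe phibar_def split: if_splits intro!: sum.cong)
  finally have off: "(\<Sum>z\<in>?S - {x}. ?p z * Accbar lam n Y f phiY a' a b x z)
      \<le> (\<Sum>l'\<in>Lset lam n - {l}. a * phiL lam n a' l l') + (\<Sum>y'\<in>Y - {y}. b * phiY y y')" .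
  have "(\<Sum>l'\<in>Lset lam n - {l}. phiL lam n a' l l') \<le> (\<Sum>l'\<in>Lset lam n. phiL lam n a' l l')"
    by (rule sum_mono2) (auto simp: finL phiL_nonneg a' less_imp_le)
  also have "\<dots> \<le> 1" using phiL_sum[OF n sm i(1) a'] i by simp
  finally have s1: "(\<Sum>l'\<in>Lset lam n - {l}. a * phiL lam n a' l l') \<le> a"
    using ab by (simp add: sum_distrib_left[symmetric] mult_left_le)
  have "(\<Sum>y'\<in>Y. phiY y y') = 1" using mk y by (simp add: markov_kernel_on_def)
  then have "(\<Sum>y'\<in>Y - {y}. phiY y y') = 1 - phiY y y" using fin y by (simp add: sum_diff1)
  then have s2: "(\<Sum>y'\<in>Y - {y}. b * phiY y y') = b * (1 - phiY y y)"
    by (simp add: sum_distrib_left[symmetric])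
  have "0 \<le> phiY y y" using phiY_nonneg y by simp
  then have s3: "b * (1 - phiY y y) \<le> b" using ab by (simp add: algebra_simps)
  have "(\<Sum>z\<in>?S - {x}. ?p z * Accbar lam n Y f phiY a' a b x z) < 1"
    using off s1 s2 s3 ab by linarith
  then show ?thesis unfolding PMH_def by simp
qed

lemma PMH_nonneg: assumes x: "x \<in> stspace lam n Y" and x': "x' \<in> stspace lam n Y"
  shows "0 \<le> PMH lam n Y f phiY a' a b x x'"
proof (cases "x = x'")
  case True then show ?thesis using PMH_diag x by (simp add: less_imp_le)
next
  case False then show ?thesis unfolding PMH_def
    using phibar_nonneg[OF x x'] Acc_nonneg[OF x x'] by simp
qed

lemma PMH_pos_iff: assumes x: "x \<in> stspace lam n Y" and x': "x' \<in> stspace lam n Y"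
  shows "(0 < PMH lam n Y f phiY a' a b x x') \<longleftrightarrow> x = x' \<or> (pat lam n phiY x x' \<and> pat lam n phiY x' x)"
  using PMH_diag[OF x] PMH_off[OF x x'] by (cases "x = x'") auto

end


lemma kpow_pat:
  assumes finS: "finite S"
    and P0: "\<forall>x\<in>S. \<forall>y\<in>S. 0 \<le> P x y" and Q0: "\<forall>x\<in>S. \<forall>y\<in>S. 0 \<le> Q x y"
    and PQ: "\<forall>x\<in>S. \<forall>y\<in>S. (0 < P x y) = (0 < Q x y)"
    and x: "x \<in> S"
  shows "x' \<in> S \<Longrightarrow> 0 \<le> kpow P S l x x' \<and> 0 \<le> kpow Q S l x x' \<and> (0 < kpow P S l x x') = (0 < kpow Q S l x x')"
proof (induction l arbitrary: x')
  case 0 then show ?case by simp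
next
  case (Suc l)
  have nnP: "\<forall>z\<in>S. 0 \<le> kpow P S l x z * P z x'" using Suc P0 by (simp add: mult_nonneg_nonneg)
  have nnQ: "\<forall>z\<in>S. 0 \<le> kpow Q S l x z * Q z x'" using Suc Q0 by (simp add: mult_nonneg_nonneg)
  have tm: "\<forall>z\<in>S. (0 < kpow P S l x z * P z x') = (0 < kpow Q S l x z * Q z x')"
  proof
    fix z assume z: "z \<in> S"
    have "0 \<le> kpow P S l x z" "0 \<le> kpow Q S l x z" "(0 < kpow P S l x z) = (0 < kpow Q S l x z)"
      using Suc.IH[OF z] by auto
    moreover have "0 \<le> P z x'" "0 \<le> Q z x'" "(0 < P z x') = (0 < Q z x')"
      using P0 Q0 PQ z Suc.prems by auto
    ultimately show "(0 < kpow P S l x z * P z x') = (0 < kpow Q S l x z * Q z x')"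
      by (smt (verit) mult_pos_pos zero_less_mult_iff)
  qed
  have pos: "\<And>g::_ \<Rightarrow> real. \<forall>z\<in>S. 0 \<le> g z \<Longrightarrow> (0 < sum g S) = (\<exists>z\<in>S. 0 < g z)"
  proof -
    fix g :: "_ \<Rightarrow> real" assume g: "\<forall>z\<in>S. 0 \<le> g z"
    have "0 \<le> sum g S" using g by (simp add: sum_nonneg)
    moreover have "(sum g S = 0) = (\<forall>z\<in>S. g z = 0)" using sum_nonneg_eq_0_iff[OF finS] g by blast
    ultimately show "(0 < sum g S) = (\<exists>z\<in>S. 0 < g z)" using g by force
  qed
  show ?case using pos[OF nnP] pos[OF nnQ] tm nnP nnQ by (simp add: sum_nonneg)
qed

theorem lemma17:
  fixes Y :: "'a set" and f :: "'a \<Rightarrow> real" and lam :: "nat \<Rightarrow> real" and n :: nat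
    and phiY :: "'a \<Rightarrow> 'a \<Rightarrow> real"
    and a1' a1 b1 a2' a2 b2 :: real
  assumes "finite Y" and "Y \<noteq> {}"
    and "n \<ge> 2"
    and "strict_mono_on {0..<n} lam" and "\<forall>i<n. lam i > 0"
    and "markov_kernel_on Y phiY" and "irreducible_on Y phiY"
    and "0 < a1'" "a1' < 1" "0 < a1" "a1 < 1" "0 < b1" "b1 < 1" "a1 + b1 < 1"
    and "0 < a2'" "a2' < 1" "0 < a2" "a2 < 1" "0 < b2" "b2 < 1" "a2 + b2 < 1"
  shows "MHdiam lam n Y f phiY a1' a1 b1 = MHdiam lam n Y f phiY a2' a2 b2"
proof -
  let ?S = "stspace lam n Y"
  let ?P = "PMH lam n Y f phiY a1' a1 b1"
  let ?Q = "PMH lam n Y f phiY a2' a2 b2"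
  have P0: "\<forall>x\<in>?S. \<forall>y\<in>?S. 0 \<le> ?P x y"
    using PMH_nonneg[of Y n lam phiY a1' a1 b1 _ _ f] assms by blast
  have Q0: "\<forall>x\<in>?S. \<forall>y\<in>?S. 0 \<le> ?Q x y"
    using PMH_nonneg[of Y n lam phiY a2' a2 b2 _ _ f] assms by blast
  have PQ: "\<forall>x\<in>?S. \<forall>y\<in>?S. (0 < ?P x y) = (0 < ?Q x y)"
    using PMH_pos_iff[of Y n lam phiY a1' a1 b1 _ _ f] PMH_pos_iff[of Y n lam phiY a2' a2 b2 _ _ f] assms
    by blast
  have fS: "finite ?S" using finS assms by blast
  have "\<And>l. (\<forall>x\<in>?S. \<forall>x'\<in>?S. kpow ?P ?S l x x' > 0) = (\<forall>x\<in>?S. \<forall>x'\<in>?S. kpow ?Q ?S l x x' > 0)"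
    using kpow_pat[OF fS P0 Q0 PQ] by blast
  then show ?thesis unfolding MHdiam_def diameter_def by simp
qed

end
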